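(* Suppose $F\in\mathcal A$. Then for every $z\in\mathbb C$, each connected component of the slice $\Omega_z$ is simply connected.
   Context: Let $F(z,w)=(P(z),Q(z,w))$ be a polynomial skew product of $\mathbb C^2$. Let $U=\{z\in\mathbb C: P^n(z)\to 0\}$ be the basin of attraction of $0$ for $P$, let $\Omega=\{(z,w)\in\mathbb C^2: F^n(z,w)\to(0,0)\}$ be the basin of attraction of $(0,0)$ for $F$, and for $z\in\mathbb C$ let $\Omega_z=\{w\in\mathbb C:(z,w)\in\Omega\}$ be the slice of $\Omega$ over $z$. We say $F$ belongs to the class $\mathcal A$ if: (i) $P$ is a polynomial of degree $d\ge 2$ with $P(0)=0$ and $0<|P'(0)|=a<1$; (ii) writing $Q(z,w)=\sum_{j=0}^d Q_j(w)z^j$ with polynomials $Q_j$, we have $\deg Q_j\le d-1$ for all $j\ge 1$, $Q_0(w)=Q(0,w)$ has degree exactly $d$, $Q_0(0)=0$, $0<|Q_0'(0)|=b<1$, $a<b$, and $\frac{\partial Q}{\partial z}(0,0)=0$ (so $(0,0)$ is an attracting fixed point of $F$); (iii) condition $\mathcal C$ holds: (C1) for every $z\in\partial U$ there is no $w$ with $(z,w)\in\overline{\Omega}$ and $\frac{\partial Q}{\partial w}(z,w)=0$; (C2) if $w\notin\Omega_0$ and $\frac{\partial Q}{\partial w}(0,w)=0$, then $w$ lies in the basin of infinity of $Q_0$ (i.e. $Q_0^n(w)\to\infty$); (C3) if $w\in\Omega_0$ and $\frac{\partial Q}{\partial w}(0,w)=0$, then $F^n(0,w)\neq(0,0)$ for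 all integers $n\ge1$; (C4) if $z\in U$ and $P'(z)=0$, then $P^n(z)\ne 0$ for all integers $n\ge 1$. *)

theory Defs
  imports "HOL-Analysis.Analysis" "HOL-Computational_Algebra.Polynomial"
begin

text \<open>A polynomial skew product F(z,w) = (P(z), Q(z,w)) with
  Q(z,w) = sum_{j=0}^d Q_j(w) z^j, d = degree P.  Q is given by the
  family of one-variable polynomials Qs j = Q_j.\<close>

definition skewQ :: "complex poly \<Rightarrow> (nat \<Rightarrow> complex poly) \<Rightarrow> complex \<Rightarrow> complex \<Rightarrow> complex" where
  "skewQ P Qs z w = (\<Sum>j\<le>degree P. poly (Qs j) w * z ^ j)"

definition skewQ_dw :: "complex poly \<Rightarrow> (nat \<Rightarrow> complex poly) \<Rightarrow> complex \<Rightarrow> complex \<Rightarrow> complex" where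
  "skewQ_dw P Qs z w = (\<Sum>j\<le>degree P. poly (pderiv (Qs j)) w * z ^ j)"

definition skewF :: "complex poly \<Rightarrow> (nat \<Rightarrow> complex poly) \<Rightarrow> complex \<times> complex \<Rightarrow> complex \<times> complex" where
  "skewF P Qs = (\<lambda>(z, w). (poly P z, skewQ P Qs z w))"

definition basinU :: "complex poly \<Rightarrow> complex set" where
  "basinU P = {z. (\<lambda>n. (poly P ^^ n) z) \<longlonglongrightarrow> 0}"

definition basinOmega :: "complex poly \<Rightarrow> (nat \<Rightarrow> complex poly) \<Rightarrow> (complex \<times> complex) set" where
  "basinOmega P Qs = {p. (\<lambda>n. (skewF P Qs ^^ n) p) \<longlonglongrightarrow> (0, 0)}"

definition slice :: "complex poly \<Rightarrow> (nat \<Rightarrow> complex poly) \<Rightarrow> complex \<Rightarrow> complex set" where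
  "slice P Qs z = {w. (z, w) \<in> basinOmega P Qs}"

definition classA :: "complex poly \<Rightarrow> (nat \<Rightarrow> complex poly) \<Rightarrow> bool" where
  "classA P Qs \<longleftrightarrow>
     (let d = degree P; a = cmod (poly (pderiv P) 0); b = cmod (poly (pderiv (Qs 0)) 0) in
      d \<ge> 2 \<and> poly P 0 = 0 \<and> 0 < a \<and> a < 1 \<and>
      (\<forall>j. 1 \<le> j \<and> j \<le> d \<longrightarrow> degree (Qs j) \<le> d - 1) \<and>
      degree (Qs 0) = d \<and> poly (Qs 0) 0 = 0 \<and> 0 < b \<and> b < 1 \<and> a < b \<and>
      poly (Qs 1) 0 = 0 \<and>
      \<comment> \<open>C1\<close>
      (\<forall>z\<in>frontier (basinU P). \<not> (\<exists>w. (z, w) \<in> closure (basinOmega P Qs) \<and> skewQ_dw P Qs z w = 0)) \<and>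
      \<comment> \<open>C2\<close>
      (\<forall>w. w \<notin> slice P Qs 0 \<and> skewQ_dw P Qs 0 w = 0 \<longrightarrow>
          filterlim (\<lambda>n. (poly (Qs 0) ^^ n) w) at_infinity sequentially) \<and>
      \<comment> \<open>C3\<close>
      (\<forall>w. w \<in> slice P Qs 0 \<and> skewQ_dw P Qs 0 w = 0 \<longrightarrow>
          (\<forall>n\<ge>1. (skewF P Qs ^^ n) (0, w) \<noteq> (0, 0))) \<and>
      \<comment> \<open>C4\<close>
      (\<forall>z. z \<in> basinU P \<and> poly (pderiv P) z = 0 \<longrightarrow> (\<forall>n\<ge>1. (poly P ^^ n) z \<noteq> 0)))"

end

theory Submission
  imports Defs "HOL-Complex_Analysis.Complex_Analysis"
begin


lemma poly_fst_deriv: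
  "((\<lambda>p::complex\<times>complex. poly P (fst p)) has_derivative (\<lambda>h. poly (pderiv P) (fst x) * fst h)) (at x)"
proof -
  have "(poly P has_derivative (\<lambda>h. poly (pderiv P) (fst x) * h)) (at (fst x))"
    using poly_DERIV[of P "fst x"] by (simp add: has_field_derivative_def)
  from has_derivative_compose[OF has_derivative_fst[OF has_derivative_ident] this]
  show ?thesis by simp
qed

lemma poly_snd_deriv:
  "((\<lambda>p::complex\<times>complex. poly P (snd p)) has_derivative (\<lambda>h. poly (pderiv P) (snd x) * snd h)) (at x)"
proof -
  have "(poly P has_derivative (\<lambda>h. poly (pderiv P) (snd x) * h)) (at (snd x))"
    using poly_DERIV[of P "snd x"] by (simp add: has_field_derivative_def)
  from has_derivative_compose[OF has_derivative_snd[OF has_derivative_ident] this]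
  show ?thesis by simp
qed

lemma skewQ_deriv0:
  assumes "poly (Qs 1) 0 = 0" "degree P \<ge> 1"
  shows "((\<lambda>p. skewQ P Qs (fst p) (snd p)) has_derivative (\<lambda>h. poly (pderiv (Qs 0)) 0 * snd h)) (at (0,0))"
proof -
  have "((\<lambda>p. \<Sum>j\<le>degree P. poly (Qs j) (snd p) * fst p ^ j) has_derivative
     (\<lambda>h. \<Sum>j\<le>degree P. poly (Qs j) (snd (0::complex,0::complex)) * (of_nat j * fst (0::complex,0::complex) ^ (j - 1) * fst h)
          + poly (pderiv (Qs j)) (snd (0::complex,0::complex)) * snd h * fst (0::complex,0::complex) ^ j)) (at (0,0))"
    apply (rule has_derivative_sum)
    apply (rule has_derivative_eq_rhs)
     apply (rule has_derivative_mult)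
      apply (rule poly_snd_deriv)
     apply (rule has_derivative_power)
     apply (rule has_derivative_fst[OF has_derivative_ident])
    apply (simp add: algebra_simps)
    done
  moreover have "(\<lambda>h. \<Sum>j\<le>degree P. poly (Qs j) (snd (0::complex,0::complex)) * (of_nat j * fst (0::complex,0::complex) ^ (j - 1) * fst h)
          + poly (pderiv (Qs j)) (snd (0::complex,0::complex)) * snd h * fst (0::complex,0::complex) ^ j)
      = (\<lambda>h. poly (pderiv (Qs 0)) 0 * snd h)"
  proof
    fix h :: "complex \<times> complex"
    have "(\<Sum>j\<le>degree P. poly (Qs j) 0 * (of_nat j * 0 ^ (j - 1) * fst h)
          + poly (pderiv (Qs j)) 0 * snd h * 0 ^ j) = 
        (\<Sum>j\<in>{0}. poly (Qs j) 0 * (of_nat j * 0 ^ (j - 1) * fst h)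
          + poly (pderiv (Qs j)) 0 * snd h * 0 ^ j)"
    proof (rule sum.mono_neutral_right)
      show "\<forall>i\<in>{..degree P} - {0}. poly (Qs i) 0 * (of_nat i * 0 ^ (i - 1) * fst h) + poly (pderiv (Qs i)) 0 * snd h * 0 ^ i = 0"
      proof
        fix i assume i: "i \<in> {..degree P} - {0}"
        show "poly (Qs i) 0 * (of_nat i * 0 ^ (i - 1) * fst h) + poly (pderiv (Qs i)) 0 * snd h * 0 ^ i = (0::complex)"
        proof (cases "i = 1")
          case True then show ?thesis using assms by simp
        next
          case False then have "i - 1 \<noteq> 0" "i \<noteq> 0" using i by auto then show ?thesis by (simp add: power_0_left)
        qed
      qed
    qed auto
    then show "(\<Sum>j\<le>degree P. poly (Qs j) (snd (0::complex,0::complex)) * (of_nat j * fst (0::complex,0::complex) ^ (j - 1) * fst h)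
          + poly (pderiv (Qs j)) (snd (0::complex,0::complex)) * snd h * fst (0::complex,0::complex) ^ j) = poly (pderiv (Qs 0)) 0 * snd h"
      by simp
  qed
  ultimately show ?thesis by (simp add: skewQ_def)
qed




lemma skewF_eq: "skewF P Qs = (\<lambda>p. (poly P (fst p), skewQ P Qs (fst p) (snd p)))"
  by (auto simp: skewF_def)

lemma skewF_0: "poly P 0 = 0 \<Longrightarrow> poly (Qs 0) 0 = 0 \<Longrightarrow> skewF P Qs (0,0) = (0,0)"
proof -
  assume a: "poly P 0 = 0" "poly (Qs 0) 0 = 0"
  have "skewQ P Qs 0 0 = (\<Sum>j\<in>{0}. poly (Qs j) 0 * 0 ^ j)"
    unfolding skewQ_def by (rule sum.mono_neutral_right) auto
  then show ?thesis using a by (simp add: skewF_def)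
qed

lemma local_contraction:
  assumes A: "classA P Qs"
  shows "\<exists>\<delta>>0. \<exists>c<1. 0 \<le> c \<and> (\<forall>p. norm p < \<delta> \<longrightarrow> norm (skewF P Qs p) \<le> c * norm p)"
proof -
  define a0 where "a0 = poly (pderiv P) 0"
  define b0 where "b0 = poly (pderiv (Qs 0)) 0"
  define b where "b = cmod b0"
  have ab: "cmod a0 < b" "b < 1" "poly P 0 = 0" "poly (Qs 0) 0 = 0" "poly (Qs 1) 0 = 0" "degree P \<ge> 1"
    using A by (auto simp: classA_def Let_def a0_def b0_def b_def)
  have D: "(skewF P Qs has_derivative (\<lambda>h. (a0 * fst h, b0 * snd h))) (at (0,0))"
    unfolding skewF_eq a0_def b0_def
    apply (rule has_derivative_Pair)
    using poly_fst_deriv[of P "(0,0)"] apply simp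
    using skewQ_deriv0[of Qs P, OF ab(5,6)] by simp
  define e where "e = (1 - b) / 2"
  have e: "e > 0" using ab by (simp add: e_def)
  obtain d where d: "d > 0" and dd: "\<And>y. norm (y - (0,0)) < d \<Longrightarrow>
      norm (skewF P Qs y - skewF P Qs (0,0) - (\<lambda>h. (a0 * fst h, b0 * snd h)) (y - (0,0))) \<le> e * norm (y - (0,0))"
    using D[unfolded has_derivative_at_alt] e by blast
  have L: "norm (a0 * fst y, b0 * snd y) \<le> b * norm y" for y :: "complex \<times> complex"
  proof -
    obtain x y' where y: "y = (x, y')" by (cases y)
    have e1: "norm (a0 * x, b0 * y') ^ 2 = (cmod a0 * cmod x) ^ 2 + (b * cmod y') ^ 2"
      by (simp add: norm_Pair norm_mult b_def)
    have e2: "(b * norm (x, y')) ^ 2 = (b * cmod x) ^ 2 + (b * cmod y') ^ 2"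
      by (simp add: norm_Pair power_mult_distrib distrib_left)
    have "(cmod a0 * cmod x) ^ 2 \<le> (b * cmod x) ^ 2"
      using ab(1) by (intro power_mono mult_right_mono) auto
    moreover have "norm (a0 * fst y, b0 * snd y) ^ 2 = (cmod a0 * cmod x) ^ 2 + (b * cmod y') ^ 2"
      using e1 y by simp
    moreover have "(b * norm y) ^ 2 = (b * cmod x) ^ 2 + (b * cmod y') ^ 2"
      using e2 y by simp
    ultimately have "norm (a0 * fst y, b0 * snd y) ^ 2 \<le> (b * norm y) ^ 2"
      by linarith
    moreover have "0 \<le> b * norm y" by (simp add: b_def)
    ultimately show ?thesis by (rule power2_le_imp_le)
  qed
  have H: "norm (skewF P Qs p) \<le> (b + e) * norm p" if "norm p < d" for p
  proof -
    have "norm (skewF P Qs p - (a0 * fst p, b0 * snd p)) \<le> e * norm p"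
      using dd[of p] that skewF_0[of P Qs, OF ab(3,4)] by (simp add: zero_prod_def[symmetric])
    then have "norm (skewF P Qs p) \<le> norm (a0 * fst p, b0 * snd p) + e * norm p"
      using norm_triangle_ineq[of "skewF P Qs p - (a0 * fst p, b0 * snd p)" "(a0 * fst p, b0 * snd p)"] by simp
    then show ?thesis using L[of p] by (simp add: algebra_simps)
  qed
  have bc: "b + e < 1" "0 \<le> b + e" using ab(2) e by (auto simp: e_def b_def field_simps)
  show ?thesis
    apply (rule exI[of _ d])
    apply (intro conjI d)
    apply (rule exI[of _ "b + e"])
    using H bc by auto
qed




lemma poly_holo: "(\<lambda>w. poly p w) holomorphic_on S"
  unfolding holomorphic_on_def field_differentiable_def
  using poly_DERIV has_field_derivative_at_within by blast

lemma skewQ_holo: "(\<lambda>w. skewQ P Qs x w) holomorphic_on S"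
  unfolding skewQ_def
  by (rule holomorphic_on_sum, rule holomorphic_on_mult[OF poly_holo holomorphic_on_const])

lemma iter_fst: "fst ((skewF P Qs ^^ n) (z,w)) = (poly P ^^ n) z"
  by (induction n) (auto simp: skewF_def split: prod.splits)

lemma iter_snd_holo: "(\<lambda>w. snd ((skewF P Qs ^^ n) (z,w))) holomorphic_on S"
proof (induction n arbitrary: S)
  case 0
  then show ?case by (simp add: holomorphic_intros)
next
  case (Suc n)
  have e: "(\<lambda>w. snd ((skewF P Qs ^^ Suc n) (z,w))) = (\<lambda>w. skewQ P Qs ((poly P ^^ n) z) w) \<circ> (\<lambda>w. snd ((skewF P Qs ^^ n) (z,w)))"
  proof
    fix w
    obtain x y where q: "(skewF P Qs ^^ n) (z,w) = (x,y)" by (cases "(skewF P Qs ^^ n) (z,w)")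
    moreover have "x = (poly P ^^ n) z" using iter_fst[where P=P and Qs=Qs and n=n and z=z and w=w] q by simp
    ultimately show "snd ((skewF P Qs ^^ Suc n) (z,w)) = ((\<lambda>w. skewQ P Qs ((poly P ^^ n) z) w) \<circ> (\<lambda>w. snd ((skewF P Qs ^^ n) (z,w)))) w"
      by (simp add: skewF_def)
  qed
  show ?case unfolding e by (rule holomorphic_on_compose[OF Suc.IH skewQ_holo])
qed

lemma iter_cont: "continuous_on S (\<lambda>w. (skewF P Qs ^^ n) (z,w))"
proof -
  have eq: "(\<lambda>w. (skewF P Qs ^^ n) (z,w)) = (\<lambda>w. ((poly P ^^ n) z, snd ((skewF P Qs ^^ n) (z,w))))"
    by (rule ext, rule prod_eqI) (simp_all add: iter_fst)
  have "continuous_on S (\<lambda>w. snd ((skewF P Qs ^^ n) (z,w)))"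
    by (rule holomorphic_on_imp_continuous_on[OF iter_snd_holo])
  then show ?thesis unfolding eq by (rule continuous_on_Pair[OF continuous_on_const])
qed

locale contr =
  fixes P :: "complex poly" and Qs :: "nat \<Rightarrow> complex poly" and \<delta> c :: real
  assumes dpos: "\<delta> > 0" and c0: "0 \<le> c" and c1: "c < 1"
    and ctr: "\<And>p. norm p < \<delta> \<Longrightarrow> norm (skewF P Qs p) \<le> c * norm p"
begin

lemma step_in: "norm p < \<delta> \<Longrightarrow> norm (skewF P Qs p) < \<delta>"
proof -
  assume p: "norm p < \<delta>"
  have "c * norm p \<le> 1 * norm p" by (rule mult_right_mono) (use c1 in auto)
  then show ?thesis using ctr[OF p] p by linarith
qed

lemma iter_bound: "norm p < \<delta> \<Longrightarrow> norm ((skewF P Qs ^^ n) p) \<le> c ^ n * norm p \<and> norm ((skewF P Qs ^^ n) p) < \<delta>"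
proof (induction n)
  case 0 then show ?case by simp
next
  case (Suc n)
  then have h: "norm ((skewF P Qs ^^ n) p) \<le> c ^ n * norm p" "norm ((skewF P Qs ^^ n) p) < \<delta>" by auto
  have "norm ((skewF P Qs ^^ Suc n) p) \<le> c * norm ((skewF P Qs ^^ n) p)"
    using ctr[OF h(2)] by simp
  also have "\<dots> \<le> c * (c ^ n * norm p)" by (rule mult_left_mono[OF h(1) c0])
  finally show ?case using step_in[OF h(2)] by simp
qed

lemma ball_basin: "norm p < \<delta> \<Longrightarrow> p \<in> basinOmega P Qs"
proof -
  assume p: "norm p < \<delta>"
  have t: "(\<lambda>n. c ^ n) \<longlonglongrightarrow> 0" by (rule LIMSEQ_power_zero) (use c0 c1 in simp)
  have t2: "(\<lambda>n. c ^ n * norm p) \<longlonglongrightarrow> 0"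
    using tendsto_mult[OF t tendsto_const[of "norm p"]] by simp
  have ev: "eventually (\<lambda>n. norm ((skewF P Qs ^^ n) p) \<le> c ^ n * norm p) sequentially"
    using iter_bound[OF p] by (intro always_eventually allI) blast
  have "(\<lambda>n. (skewF P Qs ^^ n) p) \<longlonglongrightarrow> 0"
    by (rule Lim_null_comparison[OF ev t2])
  then show ?thesis by (simp add: basinOmega_def zero_prod_def)
qed


lemma shift_basin: "(skewF P Qs ^^ n) p \<in> basinOmega P Qs \<Longrightarrow> p \<in> basinOmega P Qs"
proof -
  assume "(skewF P Qs ^^ n) p \<in> basinOmega P Qs"
  then have "(\<lambda>k. (skewF P Qs ^^ k) ((skewF P Qs ^^ n) p)) \<longlonglongrightarrow> (0,0)" by (simp add: basinOmega_def)
  moreover have "\<And>k. (skewF P Qs ^^ (k + n)) p = (skewF P Qs ^^ k) ((skewF P Qs ^^ n) p)"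
    by (simp only: funpow_add comp_apply)
  ultimately have "(\<lambda>k. (skewF P Qs ^^ (k + n)) p) \<longlonglongrightarrow> (0,0)" by (simp only:)
  then have "(\<lambda>k. (skewF P Qs ^^ k) p) \<longlonglongrightarrow> (0,0)"
    by (rule LIMSEQ_offset)
  then show ?thesis unfolding basinOmega_def by simp
qed


lemma basin_eventually: "p \<in> basinOmega P Qs \<Longrightarrow> \<exists>n. norm ((skewF P Qs ^^ n) p) < \<delta>"
proof -
  assume "p \<in> basinOmega P Qs"
  then have "(\<lambda>n. (skewF P Qs ^^ n) p) \<longlonglongrightarrow> 0" by (simp add: basinOmega_def zero_prod_def)
  from tendstoD[OF this dpos] have "eventually (\<lambda>n. dist ((skewF P Qs ^^ n) p) 0 < \<delta>) sequentially" .
  then obtain n where "dist ((skewF P Qs ^^ n) p) 0 < \<delta>" by (auto simp: eventually_sequentially)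
  then show ?thesis by auto
qed


lemma open_slice: "open (slice P Qs z)"
proof (subst open_subopen, intro ballI)
  fix w assume w: "w \<in> slice P Qs z"
  then obtain n where n: "norm ((skewF P Qs ^^ n) (z,w)) < \<delta>"
    using basin_eventually by (auto simp: slice_def)
  let ?V = "(\<lambda>w. (skewF P Qs ^^ n) (z,w)) -` ball 0 \<delta>"
  have "open ?V" using iter_cont by (intro open_vimage) auto
  moreover have "w \<in> ?V" using n by simp
  moreover have "?V \<subseteq> slice P Qs z"
  proof
    fix u assume "u \<in> ?V"
    then have "norm ((skewF P Qs ^^ n) (z,u)) < \<delta>" by simp
    then show "u \<in> slice P Qs z" using ball_basin shift_basin unfolding slice_def by blast
  qed
  ultimately show "\<exists>T. open T \<and> w \<in> T \<and> T \<subseteq> slice P Qs z" by blast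
qed

lemma mono_V: "norm ((skewF P Qs ^^ n) p) < \<delta> \<Longrightarrow> n \<le> m \<Longrightarrow> norm ((skewF P Qs ^^ m) p) < \<delta>"
proof -
  assume a: "norm ((skewF P Qs ^^ n) p) < \<delta>" "n \<le> m"
  define k where "k = m - n"
  have "m = k + n" using a(2) by (simp add: k_def)
  then have "(skewF P Qs ^^ m) p = (skewF P Qs ^^ k) ((skewF P Qs ^^ n) p)"
    by (simp only: funpow_add comp_apply)
  then show ?thesis using iter_bound[OF a(1), of k] by (simp only:)
qed

lemma compact_uniform:
  assumes K: "compact K" "K \<subseteq> slice P Qs z"
  shows "\<exists>N. \<forall>w\<in>K. norm ((skewF P Qs ^^ N) (z,w)) < \<delta>"
proof -
  define nn where "nn w = (SOME n. norm ((skewF P Qs ^^ n) (z,w)) < \<delta>)" for w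
  have nn: "norm ((skewF P Qs ^^ nn w) (z,w)) < \<delta>" if "w \<in> K" for w
  proof -
    have "(z,w) \<in> basinOmega P Qs" using K(2) that by (auto simp: slice_def)
    then have "\<exists>n. norm ((skewF P Qs ^^ n) (z,w)) < \<delta>" by (rule basin_eventually)
    then show ?thesis unfolding nn_def by (rule someI_ex)
  qed
  define V where "V w = (\<lambda>u. (skewF P Qs ^^ nn w) (z,u)) -` ball 0 \<delta>" for w
  have opn: "open (V w)" if "w \<in> K" for w
    unfolding V_def by (rule open_vimage[OF open_ball iter_cont])
  have cov: "K \<subseteq> (\<Union>w\<in>K. V w)" using nn by (auto simp: V_def)
  obtain K' where K': "K' \<subseteq> K" "finite K'" "K \<subseteq> (\<Union>w\<in>K'. V w)"
    by (rule compactE_image[OF K(1) opn cov])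
  define N where "N = Max (nn ` K')"
  have "norm ((skewF P Qs ^^ N) (z,u)) < \<delta>" if u: "u \<in> K" for u
  proof -
    obtain w where w: "w \<in> K'" "u \<in> V w" using K'(3) u by blast
    have "nn w \<le> N" unfolding N_def using w K' by auto
    then show ?thesis using mono_V[of "nn w" "(z,u)" N] w by (simp add: V_def)
  qed
  then show ?thesis by blast
qed

end




theorem lemma3p4:
  fixes P :: "complex poly" and Qs :: "nat \<Rightarrow> complex poly"
  assumes "classA P Qs"
  shows "\<forall>z. \<forall>C \<in> components (slice P Qs z). simply_connected C"
proof (intro allI ballI)
  fix z C
  assume Cc: "C \<in> components (slice P Qs z)"
  obtain \<delta> c where dc: "\<delta> > 0" "c < 1" "0 \<le> c" "\<And>p. norm p < \<delta> \<Longrightarrow> norm (skewF P Qs p) \<le> c * norm p"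
    using local_contraction[OF assms] by blast
  interpret contr P Qs \<delta> c using dc by unfold_locales auto
  let ?S = "slice P Qs z"
  have oS: "open ?S" by (rule open_slice)
  have oC: "open C" using open_components[OF oS Cc] .
  have cC: "connected C" using in_components_connected[OF Cc] .
  have CS: "C \<subseteq> ?S" using in_components_subset[OF Cc] .
  show "simply_connected C"
    unfolding simply_connected_eq_winding_number_zero[OF oC]
  proof (intro conjI cC allI impI)
    fix g w0
    assume gA: "path g \<and> path_image g \<subseteq> C \<and> pathfinish g = pathstart g \<and> w0 \<notin> C"
    show "winding_number g w0 = 0"
    proof (rule ccontr)
      assume wn: "winding_number g w0 \<noteq> 0"
      define K where "K = path_image g"
      have Kc: "compact K" using gA by (simp add: K_def compact_path_image)
      have Kne: "K \<noteq> {}" by (simp add: K_def)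
      have KC: "K \<subseteq> C" using gA by (simp add: K_def)
      have KS: "K \<subseteq> ?S" using KC CS by blast
      have w0K: "w0 \<notin> K" using KC gA by blast
      have "w0 \<notin> outside K"
        using winding_number_zero_in_outside[of g w0] gA wn by (auto simp: K_def)
      then have w0in: "w0 \<in> inside K" using w0K by (simp add: inside_outside)
      obtain N where N: "\<And>w. w \<in> K \<Longrightarrow> norm ((skewF P Qs ^^ N) (z,w)) < \<delta>"
        using compact_uniform[OF Kc KS] by blast
      define f where "f w = snd ((skewF P Qs ^^ N) (z,w))" for w
      have fholo: "f holomorphic_on A" for A
        unfolding f_def[abs_def] by (rule iter_snd_holo)
      have Feq: "(skewF P Qs ^^ N) (z,w) = ((poly P ^^ N) z, f w)" for w
        by (metis f_def iter_fst prod.collapse)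
      have "continuous_on K (\<lambda>w. norm (f w))"
        by (rule continuous_on_norm[OF holomorphic_on_imp_continuous_on[OF fholo]])
      from continuous_attains_sup[OF Kc Kne this]
      obtain w1 where w1: "w1 \<in> K" "\<And>u. u \<in> K \<Longrightarrow> norm (f u) \<le> norm (f w1)"
        by blast
      have insS: "inside K \<subseteq> ?S"
      proof
        fix w assume w: "w \<in> inside K"
        have "norm (f w) \<le> norm (f w1)"
        proof (rule maximum_modulus_frontier[of f "inside K" "norm (f w1)" w])
          show "f holomorphic_on interior (inside K)" by (rule fholo)
          show "continuous_on (closure (inside K)) f" by (rule holomorphic_on_imp_continuous_on[OF fholo])
          show "bounded (inside K)" using Kc by (simp add: bounded_inside compact_imp_bounded)
          show "norm (f u) \<le> norm (f w1)" if "u \<in> frontier (inside K)" for u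
          proof -
            have "frontier (inside K) \<subseteq> K" by (rule frontier_inside_subset[OF compact_imp_closed[OF Kc]])
            then show ?thesis using that w1(2) by blast
          qed
        qed (rule w)
        then have "norm ((skewF P Qs ^^ N) (z,w)) \<le> norm ((skewF P Qs ^^ N) (z,w1))"
          by (simp add: Feq norm_Pair power_mono)
        then have "norm ((skewF P Qs ^^ N) (z,w)) < \<delta>" using N[OF w1(1)] by simp
        then show "w \<in> ?S" using ball_basin shift_basin unfolding slice_def by blast
      qed
      have "connected (K \<union> inside K)"
        using connected_with_inside[of K] Kc gA by (simp add: K_def compact_imp_closed connected_path_image)
      moreover have "K \<union> inside K \<subseteq> ?S" using KS insS by blast
      moreover have "C \<inter> (K \<union> inside K) \<noteq> {}" using KC Kne by blast
      ultimately have "K \<union> inside K \<subseteq> C" using components_maximal[OF Cc] by blast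
      then show False using w0in gA by blast
    qed
  qed
qed


end
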